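(* For every $[p,q]\in\hat D_n$, the evaluation functional $\delta_{[p,q]}:\mathcal{A}(D_n)\to\mathbb{C}$, $a\mapsto\hat a([p,q])$, is a continuous unital homomorphism for the pointwise product, and it is a character (i.e. additionally satisfies $\delta_{[p,q]}(a^* )=\overline{\delta_{[p,q]}(a)}$ for all $a$) if and only if $[p,q]\in D_{n,\mathrm{ext}}$.
   Context: Fix $n\ge1$. $D_n=Z/U(1)$, $Z=\{r\in\mathbb{C}^{1+n}:-|r^0|^2+\sum_{i\ge1}|r^i|^2=-1\}$. $\hat D_n=\hat Z/\mathbb{C}^*$, $\hat Z=\{(p,q)\in\mathbb{C}^{1+n}\times\mathbb{C}^{1+n}:-p^0q^0+\sum_{i\ge1}p^iq^i=-1\}$, $z\cdot(p,q)=(zp,q/z)$. $\Delta_D:D_n\to\hat D_n$, $[r]\mapsto[r,\bar r]$. $\tau([p,q])=[\bar q,\bar p]$ is an anti-holomorphic involution of $\hat D_n$, and $D_{n,\mathrm{ext}}=\{x\in\hat D_n:\tau(x)=x\}$. $\mathcal{A}(D_n)=\{\hat a\circ\Delta_D:\hat a\in\mathcal{O}(\hat D_n)\}$, where $\hat a$ is uniquely determined by $a$; it is a commutative unital $*$-algebra with pointwise operations and $a^*=\bar a$ (so $\widehat{a^*}=\overline{\hat a\circ\tau}$), and a Fréchet space with seminorms $\|a\|_{D_n,K}=\sup_K|\hat a|$, $K\subseteq\hat D_n$ compact. *)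

theory Defs
  imports "HOL-Analysis.Analysis"
begin

text \<open>Points of C^(1+n) are vectors indexed by 'n option (None = index 0, Some i = index i),
  so n = CARD('n) >= 1.  Points of C^(1+n) x C^(1+n) are pairs (p,q).\<close>

type_synonym 'n cpt = "complex ^ ('n option)"
type_synonym 'n hpt = "'n cpt \<times> 'n cpt"

definition cscale :: "complex \<Rightarrow> complex ^ 'i \<Rightarrow> complex ^ 'i" where
  "cscale c v = (\<chi> j. c * v $ j)"

definition cconj :: "complex ^ 'i \<Rightarrow> complex ^ 'i" where
  "cconj v = (\<chi> j. cnj (v $ j))"

definition bform :: "('n::finite) cpt \<Rightarrow> 'n cpt \<Rightarrow> complex" where
  "bform p q = - (p $ None * q $ None) + (\<Sum>i\<in>UNIV. p $ Some i * q $ Some i)"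

definition hatZ :: "('n::finite) hpt set" where
  "hatZ = {(p, q). bform p q = -1}"

definition orbit :: "('n::finite) hpt \<Rightarrow> 'n hpt set" where
  "orbit z = {(cscale c (fst z), cscale (inverse c) (snd z)) | c. c \<noteq> 0}"

definition hatD :: "('n::finite) hpt set set" where
  "hatD = orbit ` hatZ"

definition hatD_top :: "('n::finite) hpt set topology" where
  "hatD_top = topology (\<lambda>U. U \<subseteq> hatD \<and>
       openin (top_of_set hatZ) {z \<in> hatZ. orbit z \<in> U})"

definition tau :: "('n::finite) hpt set \<Rightarrow> 'n hpt set" where
  "tau x = (\<lambda>(p, q). (cconj q, cconj p)) ` x"

definition Dext :: "('n::finite) hpt set set" where
  "Dext = {x \<in> hatD. tau x = x}"

text \<open>Holomorphy on an open subset of the ambient space C^(1+n) x C^(1+n):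
  Frechet differentiable with complex-linear derivative.\<close>
definition iscale :: "('n::finite) hpt \<Rightarrow> 'n hpt" where
  "iscale w = (cscale \<i> (fst w), cscale \<i> (snd w))"

definition holo_on :: "(('n::finite) hpt \<Rightarrow> complex) \<Rightarrow> 'n hpt set \<Rightarrow> bool" where
  "holo_on G U \<longleftrightarrow> (\<forall>z\<in>U. \<exists>D. (G has_derivative D) (at z) \<and> (\<forall>w. D (iscale w) = \<i> * D w))"

text \<open>Holomorphy on the complex submanifold hat Z: locally the restriction of an ambient
  holomorphic function.\<close>
definition holo_on_hatZ :: "(('n::finite) hpt \<Rightarrow> complex) \<Rightarrow> bool" where
  "holo_on_hatZ F \<longleftrightarrow> (\<forall>z\<in>hatZ. \<exists>U G. open U \<and> z \<in> U \<and> holo_on G U \<and>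
        (\<forall>w\<in>U \<inter> hatZ. G w = F w))"

text \<open>O(hat D_n): functions on hat D_n whose pullback to hat Z is holomorphic.
  (Values off hatD are irrelevant.)\<close>
definition Ohat :: "(('n::finite) hpt set \<Rightarrow> complex) set" where
  "Ohat = {f. holo_on_hatZ (\<lambda>z. f (orbit z))}"

text \<open>A(D_n) is identified with O(hat D_n) via a |-> hat a.  Star: hat(a^*) = conj(hat a o tau).\<close>
definition astar :: "(('n::finite) hpt set \<Rightarrow> complex) \<Rightarrow> ('n hpt set \<Rightarrow> complex)" where
  "astar f = (\<lambda>x. cnj (f (tau x)))"

definition seminorm :: "('n::finite) hpt set set \<Rightarrow> ('n hpt set \<Rightarrow> complex) \<Rightarrow> real" where
  "seminorm K f = (SUP x\<in>K. norm (f x))"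

definition A_top :: "(('n::finite) hpt set \<Rightarrow> complex) topology" where
  "A_top = topology_generated_by
     {{g \<in> Ohat. seminorm K (\<lambda>x. g x - f x) < e} | f K e.
        f \<in> Ohat \<and> compactin hatD_top K \<and> e > 0}"

definition aadd :: "('a \<Rightarrow> complex) \<Rightarrow> ('a \<Rightarrow> complex) \<Rightarrow> ('a \<Rightarrow> complex)" where
  "aadd f g = (\<lambda>y. f y + g y)"
definition asmul :: "complex \<Rightarrow> ('a \<Rightarrow> complex) \<Rightarrow> ('a \<Rightarrow> complex)" where
  "asmul c f = (\<lambda>y. c * f y)"
definition amul :: "('a \<Rightarrow> complex) \<Rightarrow> ('a \<Rightarrow> complex) \<Rightarrow> ('a \<Rightarrow> complex)" where
  "amul f g = (\<lambda>y. f y * g y)"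
definition aone :: "'a \<Rightarrow> complex" where
  "aone = (\<lambda>y. 1)"
definition delta :: "('n::finite) hpt set \<Rightarrow> ('n hpt set \<Rightarrow> complex) \<Rightarrow> complex" where
  "delta x f = f x"

end

theory Submission
  imports Defs
begin

lemma orbit_self: "z \<in> orbit z"
proof -
  have "z = (cscale 1 (fst z), cscale (inverse 1) (snd z))"
    by (simp add: cscale_def vec_eq_iff)
  then show ?thesis unfolding orbit_def by (intro CollectI exI[of _ 1]) simp
qed

lemma hatD_istop: "istopology (\<lambda>U. U \<subseteq> (hatD::('a::finite) hpt set set) \<and> openin (top_of_set hatZ) {z \<in> hatZ. orbit z \<in> U})"
    unfolding istopology_def
  proof (rule conjI; intro allI impI)
    fix S T :: "'a hpt set set"
    assume a: "S \<subseteq> hatD \<and> openin (top_of_set hatZ) {z \<in> hatZ. orbit z \<in> S}"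
       and b: "T \<subseteq> hatD \<and> openin (top_of_set hatZ) {z \<in> hatZ. orbit z \<in> T}"
    have "{z \<in> hatZ. orbit z \<in> S \<inter> T} = {z \<in> hatZ. orbit z \<in> S} \<inter> {z \<in> hatZ. orbit z \<in> T}" by auto
    then show "S \<inter> T \<subseteq> hatD \<and> openin (top_of_set hatZ) {z \<in> hatZ. orbit z \<in> S \<inter> T}"
      using a b by auto
  next
    fix K :: "'a hpt set set set"
    assume a: "\<forall>S\<in>K. S \<subseteq> hatD \<and> openin (top_of_set hatZ) {z \<in> hatZ. orbit z \<in> S}"
    have "{z \<in> hatZ. orbit z \<in> \<Union>K} = (\<Union>S\<in>K. {z \<in> hatZ. orbit z \<in> S})" by auto
    then show "\<Union>K \<subseteq> hatD \<and> openin (top_of_set hatZ) {z \<in> hatZ. orbit z \<in> \<Union>K}"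
      using a by auto
  qed

lemma hatD_top_open: "openin hatD_top U \<longleftrightarrow> U \<subseteq> hatD \<and>
       openin (top_of_set hatZ) {z \<in> hatZ. orbit z \<in> U}"
  unfolding hatD_top_def by (subst topology_inverse'[OF hatD_istop]) simp

lemma topspace_hatD_top: "topspace hatD_top = hatD"
proof -
  have eq: "{z \<in> hatZ. orbit z \<in> hatD} = hatZ" unfolding hatD_def by auto
  have "openin hatD_top hatD"
    unfolding hatD_top_open by (subst eq) simp
  moreover have "topspace hatD_top \<subseteq> hatD"
    using hatD_top_open openin_topspace by blast
  ultimately show ?thesis using openin_subset by blast
qed

definition fI :: "'n option \<Rightarrow> 'n option \<Rightarrow> ('n::finite) hpt set \<Rightarrow> complex" where
  "fI i j y = (SOME v. \<exists>z\<in>y. v = fst z $ i * snd z $ j)"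

lemma inv_orbit:
  assumes "w \<in> orbit z" shows "fst w $ i * snd w $ j = fst z $ i * snd z $ j"
proof -
  from assms obtain c where c: "c \<noteq> 0" "w = (cscale c (fst z), cscale (inverse c) (snd z))"
    unfolding orbit_def by blast
  then show ?thesis by (simp add: cscale_def field_simps)
qed

lemma fI_orbit: "fI i j (orbit z) = fst z $ i * snd z $ j"
proof -
  have "\<exists>v. \<exists>w\<in>orbit z. v = fst w $ i * snd w $ j"
    using orbit_self by blast
  then have "\<exists>w\<in>orbit z. fI i j (orbit z) = fst w $ i * snd w $ j"
    unfolding fI_def by (rule someI_ex)
  then show ?thesis using inv_orbit by metis
qed

lemma tau_orbit: "tau (orbit (p, q)) = orbit (cconj q, cconj p)"
proof
  show "tau (orbit (p, q)) \<subseteq> orbit (cconj q, cconj p)"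
  proof
    fix y assume "y \<in> tau (orbit (p, q))"
    then obtain c where c: "c \<noteq> 0" "y = (cconj (cscale (inverse c) q), cconj (cscale c p))"
      unfolding tau_def orbit_def by auto
    define d where "d = cnj (inverse c)"
    have "d \<noteq> 0" using c by (simp add: d_def)
    moreover have "y = (cscale d (cconj q), cscale (inverse d) (cconj p))"
      using c by (simp add: d_def cscale_def cconj_def vec_eq_iff)
    ultimately show "y \<in> orbit (cconj q, cconj p)" unfolding orbit_def by auto
  qed
next
  show "orbit (cconj q, cconj p) \<subseteq> tau (orbit (p, q))"
  proof
    fix y assume "y \<in> orbit (cconj q, cconj p)"
    then obtain d where d: "d \<noteq> 0" "y = (cscale d (cconj q), cscale (inverse d) (cconj p))"
      unfolding orbit_def by auto
    define c where "c = cnj (inverse d)"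
    have "c \<noteq> 0" using d by (simp add: c_def)
    then have "(cscale c p, cscale (inverse c) q) \<in> orbit (p, q)" unfolding orbit_def by auto
    moreover have "y = (\<lambda>(p, q). (cconj q, cconj p)) (cscale c p, cscale (inverse c) q)"
      using d by (simp add: c_def cscale_def cconj_def vec_eq_iff)
    ultimately show "y \<in> tau (orbit (p, q))" unfolding tau_def by blast
  qed
qed

lemma orbit_scale:
  assumes "c \<noteq> 0" shows "orbit (cscale c p, cscale (inverse c) q) = orbit (p, q)"
proof
  show "orbit (cscale c p, cscale (inverse c) q) \<subseteq> orbit (p, q)"
  proof
    fix y assume "y \<in> orbit (cscale c p, cscale (inverse c) q)"
    then obtain d where d: "d \<noteq> 0" "y = (cscale d (cscale c p), cscale (inverse d) (cscale (inverse c) q))"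
      unfolding orbit_def by auto
    have "d * c \<noteq> 0" using d assms by simp
    moreover have "y = (cscale (d*c) p, cscale (inverse (d*c)) q)"
      using d by (simp add: cscale_def vec_eq_iff)
    ultimately show "y \<in> orbit (p, q)" unfolding orbit_def by auto
  qed
next
  show "orbit (p, q) \<subseteq> orbit (cscale c p, cscale (inverse c) q)"
  proof
    fix y assume "y \<in> orbit (p, q)"
    then obtain d where d: "d \<noteq> 0" "y = (cscale d p, cscale (inverse d) q)"
      unfolding orbit_def by auto
    have "d / c \<noteq> 0" using d assms by simp
    moreover have "y = (cscale (d/c) (cscale c p), cscale (inverse (d/c)) (cscale (inverse c) q))"
      using d assms by (simp add: cscale_def vec_eq_iff field_simps)
    ultimately show "y \<in> orbit (cscale c p, cscale (inverse c) q)" unfolding orbit_def by auto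
  qed
qed

lemma key:
  assumes H: "\<And>i j. cnj (q$i) * cnj (p$j) = p$i * q$j" and a: "p$a \<noteq> 0" and b: "q$b \<noteq> 0"
  shows "orbit (cconj q, cconj p) = orbit (p, q)"
proof -
  have ab: "cnj (q$a) * cnj (p$b) = p$a * q$b" using H by blast
  then have pb: "p$b \<noteq> 0" and qa: "q$a \<noteq> 0" using a b by auto
  define c where "c = q$b / cnj (p$b)"
  have c0: "c \<noteq> 0" using b pb by (simp add: c_def)
  have 1: "cconj q = cscale c p"
  proof -
    have "cnj (q$i) = c * p$i" for i
      using H[of i b] pb by (simp add: c_def field_simps)
    then show ?thesis by (simp add: cconj_def cscale_def vec_eq_iff)
  qed
  have 2: "cconj p = cscale (inverse c) q"
  proof -
    have "cnj (p$j) = inverse c * q$j" for j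
    proof -
      have "cnj (q$a) * (cnj (p$j) * q$b) = cnj (q$a) * (cnj (p$b) * q$j)"
        using H[of a j] ab by (simp add: algebra_simps)
      then have "cnj (p$j) * q$b = cnj (p$b) * q$j" using qa by simp
      then show ?thesis using b pb by (simp add: c_def field_simps)
    qed
    then show ?thesis by (simp add: cconj_def cscale_def vec_eq_iff)
  qed
  show ?thesis unfolding 1 2 using orbit_scale[OF c0] .
qed

lemma fI_Ohat: "fI i j \<in> Ohat"
  unfolding Ohat_def holo_on_hatZ_def
proof (intro CollectI ballI)
  fix z :: "'a hpt"
  let ?G = "\<lambda>w::'a hpt. fst w $ i * snd w $ j"
  have "holo_on ?G UNIV"
    unfolding holo_on_def
  proof
    fix w :: "'a hpt"
    have "(?G has_derivative (\<lambda>h. fst w $ i * snd h $ j + fst h $ i * snd w $ j)) (at w)"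
      by (auto intro!: derivative_eq_intros bounded_linear_imp_has_derivative
          bounded_linear_compose[OF bounded_linear_vec_nth bounded_linear_fst]
          bounded_linear_compose[OF bounded_linear_vec_nth bounded_linear_snd])
    moreover have "\<forall>h. (\<lambda>h. fst w $ i * snd h $ j + fst h $ i * snd w $ j) (iscale h)
        = \<i> * (\<lambda>h. fst w $ i * snd h $ j + fst h $ i * snd w $ j) h"
      by (simp add: iscale_def cscale_def algebra_simps)
    ultimately show "\<exists>D. (?G has_derivative D) (at w) \<and> (\<forall>h. D (iscale h) = \<i> * D h)"
      by blast
  qed
  then show "\<exists>U G. open U \<and> z \<in> U \<and> holo_on G U \<and> (\<forall>w\<in>U \<inter> hatZ. G w = fI i j (orbit w))"
    by (intro exI[of _ UNIV] exI[of _ ?G]) (simp add: fI_orbit)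
qed

lemma hatZ_nonzero:
  assumes "(p, q) \<in> (hatZ::('n::finite) hpt set)"
  shows "\<exists>a. p $ a \<noteq> 0" "\<exists>b. q $ b \<noteq> 0"
proof -
  have "False" if "\<forall>a. p$a = 0" using assms that by (simp add: hatZ_def bform_def)
  then show "\<exists>a. p $ a \<noteq> 0" by blast
  have "False" if "\<forall>a. q$a = 0" using assms that by (simp add: hatZ_def bform_def)
  then show "\<exists>b. q $ b \<noteq> 0" by blast
qed

lemma delta_cont:
  assumes "x \<in> hatD"
  shows "continuous_map A_top euclidean (delta x)"
  unfolding continuous_map_def
proof (rule conjI)
  show "delta x \<in> topspace A_top \<rightarrow> topspace euclidean" by simp
next
  show "\<forall>U. openin euclidean U \<longrightarrow> openin A_top {g \<in> topspace A_top. delta x g \<in> U}"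
  proof (intro allI impI)
  fix U :: "complex set"
  assume "openin euclidean U"
  then have oU: "open U" by simp
  show "openin A_top {g \<in> topspace A_top. delta x g \<in> U}"
  proof (subst openin_subopen, intro ballI)
    fix g assume g: "g \<in> {g \<in> topspace A_top. delta x g \<in> U}"
    then have gx: "g x \<in> U" by (simp add: delta_def)
    obtain e where e: "e > 0" "ball (g x) e \<subseteq> U" using oU gx open_contains_ball by blast
    have "g \<in> Ohat" using g unfolding A_top_def by auto
    define T where "T = {h \<in> Ohat. seminorm {x} (\<lambda>y. h y - g y) < e}"
    have K: "compactin hatD_top {x}" using assms by (simp add: topspace_hatD_top)
    have TS: "T \<in> {{h \<in> Ohat. seminorm K (\<lambda>y. h y - f y) < e} | f K e.
        f \<in> Ohat \<and> compactin hatD_top K \<and> e > 0}"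
      unfolding T_def using \<open>g \<in> Ohat\<close> K e by blast
    have oT: "openin A_top T" unfolding A_top_def by (rule topology_generated_by_Basis[OF TS])
    have sn: "seminorm {x} f = norm (f x)" for f :: "'a hpt set \<Rightarrow> complex"
      by (simp add: seminorm_def)
    have "g \<in> T" using e \<open>g \<in> Ohat\<close> by (simp add: T_def sn)
    moreover have "T \<subseteq> {g \<in> topspace A_top. delta x g \<in> U}"
    proof
      fix h assume h: "h \<in> T"
      then have "h \<in> topspace A_top" using oT openin_subset by blast
      moreover have "dist (g x) (h x) < e" using h by (simp add: T_def sn dist_norm norm_minus_commute)
      then have "h x \<in> U" using e by auto
      ultimately show "h \<in> {g \<in> topspace A_top. delta x g \<in> U}" by (simp add: delta_def)
    qed
    ultimately show "\<exists>T. openin A_top T \<and> g \<in> T \<and> T \<subseteq> {g \<in> topspace A_top. delta x g \<in> U}"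
      using oT by blast
  qed
  qed
qed

lemma delta_star:
  assumes "x \<in> hatD"
  shows "(\<forall>f\<in>Ohat. delta x (astar f) = cnj (delta x f)) \<longleftrightarrow> x \<in> Dext"
proof
  assume "x \<in> Dext"
  then have "tau x = x" by (simp add: Dext_def)
  then show "\<forall>f\<in>Ohat. delta x (astar f) = cnj (delta x f)"
    by (simp add: delta_def astar_def)
next
  assume H: "\<forall>f\<in>Ohat. delta x (astar f) = cnj (delta x f)"
  obtain p q where pq: "(p, q) \<in> hatZ" "x = orbit (p, q)" using assms unfolding hatD_def by auto
  have "cnj (q$i) * cnj (p$j) = p$i * q$j" for i j
  proof -
    have "cnj (fI i j (tau x)) = cnj (fI i j x)"
      using H fI_Ohat[of i j] by (simp add: delta_def astar_def)
    then have "fI i j (tau x) = fI i j x" by simp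
    then show ?thesis using pq by (simp add: tau_orbit fI_orbit cconj_def)
  qed
  moreover obtain a b where "p $ a \<noteq> 0" "q $ b \<noteq> 0" using hatZ_nonzero[OF pq(1)] by blast
  ultimately have "orbit (cconj q, cconj p) = orbit (p, q)" by (intro key)
  then have "tau x = x" using pq by (simp add: tau_orbit)
  then show "x \<in> Dext" using assms by (simp add: Dext_def)
qed

theorem proposition4p8:
  fixes x :: "('n::finite) hpt set"
  assumes "x \<in> hatD"
  shows "continuous_map A_top euclidean (delta x)
    \<and> (\<forall>f\<in>Ohat. \<forall>g\<in>Ohat. delta x (aadd f g) = delta x f + delta x g)
    \<and> (\<forall>f\<in>Ohat. \<forall>c. delta x (asmul c f) = c * delta x f)
    \<and> (\<forall>f\<in>Ohat. \<forall>g\<in>Ohat. delta x (amul f g) = delta x f * delta x g)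
    \<and> delta x aone = 1
    \<and> ((\<forall>f\<in>Ohat. delta x (astar f) = cnj (delta x f)) \<longleftrightarrow> x \<in> Dext)"
  using delta_cont[OF assms] delta_star[OF assms]
  by (simp add: delta_def aadd_def asmul_def amul_def aone_def)

end
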